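(* Let $n\ge2$, $q_1,q_2\in\mathbb{C}$ with $q_1q_2\ne0$ and $q=-q_2/q_1$ not a root of unity. Let $G=\rho(B_n)\subseteq\mathrm{GL}(\mathbf{F})$ be the image of the reduced Burau representation and $\overline{G}$ its Zariski closure in $\mathrm{GL}(\mathbf{F})$. Suppose $q_1^{n-2}q_2$ is not a root of unity. Then for every $g\in G$ and every nonzero $z\in\mathbb{C}$, $zg\in\overline{G}$.
   Context: Artin's braid group $B_n$ has generators $\sigma_1,\dots,\sigma_{n-1}$ with the braid relations. $\mathbf{E}=\mathbb{C}^n$ with basis $e_1,\dots,e_n$ carries the generalized Burau representation $\sigma_ie_j=q_1e_j$ ($j\ne i,i+1$), $\sigma_ie_{i+1}=-q_2e_i$, $\sigma_ie_i=(q_1+q_2)e_i+q_1e_{i+1}$; $\mathbf{F}=\mathrm{span}\{q_2e_i+q_1e_{i+1}:1\le i\le n-1\}$ is an $(n-1)$-dimensional $B_n$-submodule and $\rho:B_n\to\mathrm{GL}(\mathbf{F})$ is the resulting action. *)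

theory Defs
  imports "Jordan_Normal_Form.Matrix" "Jordan_Normal_Form.Determinant"
begin

(* Indices are 0-based: the basis e_1..e_n of E = C^n is e_0..e_{n-1} here, and the
   generator sigma_i (1 <= i <= n-1) of B_n is indexed by i-1 in {0..<n-1}. *)

(* Matrix of the generalized Burau action of sigma_(i+1) on E = C^n (columns = images of e_j):
   sigma e_j = q1 e_j (j \<noteq> i,i+1), sigma e_(i+1) = -q2 e_i, sigma e_i = (q1+q2) e_i + q1 e_(i+1). *)
definition burau_mat :: "nat \<Rightarrow> complex \<Rightarrow> complex \<Rightarrow> nat \<Rightarrow> complex mat" where
  "burau_mat n q1 q2 i = mat n n (\<lambda>(r, c).
      if c = i then (if r = i then q1 + q2 else if r = i + 1 then q1 else 0)
      else if c = i + 1 then (if r = i then - q2 else 0)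
      else if r = c then q1 else 0)"

(* n x (n-1) matrix whose j-th column is f_j = q2 e_j + q1 e_(j+1), the spanning vectors of F *)
definition F_basis :: "nat \<Rightarrow> complex \<Rightarrow> complex \<Rightarrow> complex mat" where
  "F_basis n q1 q2 = mat n (n - 1) (\<lambda>(r, j).
      if r = j then q2 else if r = j + 1 then q1 else 0)"

(* rho(sigma_(i+1)) in GL(F), written in the basis f_0..f_(n-2) of F:
   the (n-1)x(n-1) matrix M with  burau * [f_0 .. f_(n-2)] = [f_0 .. f_(n-2)] * M *)
definition rho_gen :: "nat \<Rightarrow> complex \<Rightarrow> complex \<Rightarrow> nat \<Rightarrow> complex mat" where
  "rho_gen n q1 q2 i = (THE M. M \<in> carrier_mat (n - 1) (n - 1) \<and>
      burau_mat n q1 q2 i * F_basis n q1 q2 = F_basis n q1 q2 * M)"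

(* G = rho(B_n): the subgroup of GL(F) generated by the rho(sigma_i)
   (B_n is generated by the sigma_i, so its image is generated by their images). *)
inductive_set burau_image :: "nat \<Rightarrow> complex \<Rightarrow> complex \<Rightarrow> complex mat set"
  for n q1 q2 where
  one: "1\<^sub>m (n - 1) \<in> burau_image n q1 q2"
| gen: "g \<in> burau_image n q1 q2 \<Longrightarrow> i < n - 1 \<Longrightarrow> rho_gen n q1 q2 i * g \<in> burau_image n q1 q2"
| gen_inv: "g \<in> burau_image n q1 q2 \<Longrightarrow> i < n - 1 \<Longrightarrow> h \<in> carrier_mat (n - 1) (n - 1) \<Longrightarrow>
     inverts_mat h (rho_gen n q1 q2 i) \<Longrightarrow> h * g \<in> burau_image n q1 q2"

inductive_set poly_fun :: "nat \<Rightarrow> (complex mat \<Rightarrow> complex) set" for N where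
  const: "(\<lambda>A. c) \<in> poly_fun N"
| entry: "i < N \<Longrightarrow> j < N \<Longrightarrow> (\<lambda>A. A $$ (i, j)) \<in> poly_fun N"
| add: "p \<in> poly_fun N \<Longrightarrow> p' \<in> poly_fun N \<Longrightarrow> (\<lambda>A. p A + p' A) \<in> poly_fun N"
| mult: "p \<in> poly_fun N \<Longrightarrow> p' \<in> poly_fun N \<Longrightarrow> (\<lambda>A. p A * p' A) \<in> poly_fun N"

(* Zariski closure of S inside GL_N(C): GL_N is the principal open set det \<noteq> 0 of the
   matrix space, so its closed sets are the traces of zero sets of polynomials in the entries. *)
definition zariski_closure_GL :: "nat \<Rightarrow> complex mat set \<Rightarrow> complex mat set" where
  "zariski_closure_GL N S = {A \<in> carrier_mat N N. det A \<noteq> 0 \<and>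
      (\<forall>p \<in> poly_fun N. (\<forall>B \<in> S. p B = 0) \<longrightarrow> p A = 0)}"

definition root_of_unity :: "complex \<Rightarrow> bool" where
  "root_of_unity z \<longleftrightarrow> (\<exists>k::nat. k > 0 \<and> z ^ k = 1)"

end

theory Submission imports Defs "HOL-Computational_Algebra.Polynomial" begin


lemma mat_eq_by_vec:
  fixes A B :: "complex mat"
  assumes A: "A \<in> carrier_mat nr nc" and B: "B \<in> carrier_mat nr nc"
    and h: "\<And>x. A *\<^sub>v vec nc x = B *\<^sub>v vec nc x"
  shows "A = B"
proof (rule eq_matI)
  fix i j assume i: "i < dim_row B" and j: "j < dim_col B"
  have u: "unit_vec nc j = vec nc (\<lambda>k. if k = j then 1 else 0)"
    by (auto simp: unit_vec_def)
  have "A $$ (i,j) = (A *\<^sub>v unit_vec nc j) $ i" using A B i j by simp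
  also have "\<dots> = (B *\<^sub>v unit_vec nc j) $ i" unfolding u h ..
  also have "\<dots> = B $$ (i,j)" using A B i j by simp
  finally show "A $$ (i,j) = B $$ (i,j)" .
qed (use A B in auto)

lemma mat_vec_sum: "r < nr \<Longrightarrow> (mat nr nc f *\<^sub>v vec nc x) $ r = (\<Sum>c<nc. f (r,c) * (x c :: complex))"
  by (simp add: scalar_prod_def row_def lessThan_atLeast0 mult.commute)

lemma sum_delta_lt: "(\<Sum>c<(N::nat). if c = a then g c else (0::complex)) = (if a < N then g a else 0)"
  by (subst sum.delta) auto

definition Rm :: "nat \<Rightarrow> complex \<Rightarrow> complex \<Rightarrow> nat \<Rightarrow> complex mat" where
  "Rm n q1 q2 i = mat (n-1) (n-1) (\<lambda>(r,c). if r = i then (if c + 1 = i then q1 else if c = i then q2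
      else if c = i + 1 then - q2 else 0) else if r = c then q1 else 0)"

definition rf :: "nat \<Rightarrow> complex \<Rightarrow> complex \<Rightarrow> nat \<Rightarrow> (nat \<Rightarrow> complex) \<Rightarrow> nat \<Rightarrow> complex" where
  "rf N q1 q2 i x r = (if r = i then (if 1 \<le> i then q1 * x (i-1) else 0) + q2 * x i
      - (if i+1 < N then q2 * x (i+1) else 0) else q1 * x r)"

definition ff :: "nat \<Rightarrow> complex \<Rightarrow> complex \<Rightarrow> (nat \<Rightarrow> complex) \<Rightarrow> nat \<Rightarrow> complex" where
  "ff N q1 q2 x r = (if r < N then q2 * x r else 0) + (if 1 \<le> r then q1 * x (r-1) else 0)"

definition bf :: "complex \<Rightarrow> complex \<Rightarrow> nat \<Rightarrow> (nat \<Rightarrow> complex) \<Rightarrow> nat \<Rightarrow> complex" where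
  "bf q1 q2 i y r = (if r = i then (q1+q2) * y i - q2 * y (i+1) else if r = i+1 then q1 * y i else q1 * y r)"

lemma Rm_carrier: "Rm n q1 q2 i \<in> carrier_mat (n-1) (n-1)"
  by (simp add: Rm_def)

lemma Rm_vec: assumes "i < n - 1"
  shows "Rm n q1 q2 i *\<^sub>v vec (n-1) x = vec (n-1) (rf (n-1) q1 q2 i x)"
proof (rule eq_vecI)
  fix r assume r: "r < dim_vec (vec (n-1) (rf (n-1) q1 q2 i x))"
  hence r': "r < n - 1" by simp
  show "(Rm n q1 q2 i *\<^sub>v vec (n-1) x) $ r = vec (n-1) (rf (n-1) q1 q2 i x) $ r"
  proof (cases "r = i")
    case True
    have e: "\<And>c. (case (r,c) of (r,c) \<Rightarrow> if r = i then (if c + 1 = i then q1 else if c = i then q2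
      else if c = i + 1 then - q2 else 0) else if r = c then q1 else 0) * x c =
      (if c = i - 1 then (if 1 \<le> i then q1 * x c else 0) else 0) + (if c = i then q2 * x c else 0)
       + (if c = i + 1 then - q2 * x c else 0)" using True by auto
    show ?thesis unfolding Rm_def mat_vec_sum[OF r'] e
      using r' True assms by (auto simp add: sum.distrib sum_delta_lt rf_def)
  next
    case False
    have e: "\<And>c. (case (r,c) of (r,c) \<Rightarrow> if r = i then (if c + 1 = i then q1 else if c = i then q2
      else if c = i + 1 then - q2 else 0) else if r = c then q1 else 0) * x c =
      (if c = r then q1 * x c else 0)" using False by auto
    show ?thesis unfolding Rm_def mat_vec_sum[OF r'] e
      using r' False assms by (simp add: sum_delta_lt rf_def)
  qed
qed (simp add: Rm_def)

lemma F_vec: assumes "n \<ge> 1"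
  shows "F_basis n q1 q2 *\<^sub>v vec (n-1) x = vec n (ff (n-1) q1 q2 x)"
proof (rule eq_vecI)
  fix r assume r: "r < dim_vec (vec n (ff (n-1) q1 q2 x))"
  hence r': "r < n" by simp
  have e: "\<And>c. (case (r,c) of (r, j) \<Rightarrow> if r = j then q2 else if r = j + 1 then q1 else 0) * x c =
     (if c = r then q2 * x c else 0) + (if c = r - 1 then (if 1 \<le> r then q1 * x c else 0) else 0)"
    by auto
  show "(F_basis n q1 q2 *\<^sub>v vec (n-1) x) $ r = vec n (ff (n-1) q1 q2 x) $ r"
    unfolding F_basis_def mat_vec_sum[OF r'] e
    using r' assms by (auto simp add: sum.distrib sum_delta_lt ff_def)
qed (simp add: F_basis_def)

lemma B_vec: assumes "i + 1 < n"
  shows "burau_mat n q1 q2 i *\<^sub>v vec n y = vec n (bf q1 q2 i y)"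
proof (rule eq_vecI)
  fix r assume r: "r < dim_vec (vec n (bf q1 q2 i y))"
  hence r': "r < n" by simp
  have e: "\<And>c. (case (r,c) of (r, c) \<Rightarrow>
      if c = i then (if r = i then q1 + q2 else if r = i + 1 then q1 else 0)
      else if c = i + 1 then (if r = i then - q2 else 0)
      else if r = c then q1 else 0) * y c =
     (if c = i then (if r = i then q1 + q2 else if r = i + 1 then q1 else 0) * y c else 0)
     + (if c = i + 1 then (if r = i then - q2 else 0) * y c else 0)
     + (if c = r then (if r \<noteq> i \<and> r \<noteq> i + 1 then q1 * y c else 0) else 0)"
    by auto
  show "(burau_mat n q1 q2 i *\<^sub>v vec n y) $ r = vec n (bf q1 q2 i y) $ r"
    unfolding burau_mat_def mat_vec_sum[OF r'] e
    using r' assms by (simp add: sum.distrib sum_delta_lt bf_def)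
qed (simp add: burau_mat_def)

lemma bf_ff: assumes "i + 1 < n" "r < n"
  shows "bf q1 q2 i (ff (n-1) q1 q2 x) r = ff (n-1) q1 q2 (rf (n-1) q1 q2 i x) r"
  using assms by (auto simp: bf_def ff_def rf_def algebra_simps)

lemma ff_inj: assumes q2: "q2 \<noteq> 0" and h: "\<forall>r<Suc N. ff N q1 q2 x r = ff N q1 q2 y r"
  shows "\<forall>r<N. x r = y r"
proof -
  have "r < N \<Longrightarrow> x r = y r" for r
  proof (induction r)
    case 0
    then show ?case using h[rule_format, of 0] q2 by (simp add: ff_def)
  next
    case (Suc r)
    then have "x r = y r" by simp
    then show ?case using h[rule_format, of "Suc r"] q2 Suc.prems by (simp add: ff_def)
  qed
  then show ?thesis by blast
qed

lemma vec_expand: "u \<in> carrier_vec m \<Longrightarrow> u = vec m (\<lambda>j. u $ j)"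
  by auto

lemma F_inj_vec: assumes q2: "q2 \<noteq> 0" and n: "n \<ge> 1" and u: "u \<in> carrier_vec (n-1)"
  and w: "w \<in> carrier_vec (n-1)" and eq: "F_basis n q1 q2 *\<^sub>v u = F_basis n q1 q2 *\<^sub>v w"
shows "u = w"
proof -
  have uu: "vec (n-1) (\<lambda>j. u $ j) = u" using u by auto
  have ww: "vec (n-1) (\<lambda>j. w $ j) = w" using w by auto
  have fu: "F_basis n q1 q2 *\<^sub>v u = vec n (ff (n-1) q1 q2 (\<lambda>j. u $ j))"
    using F_vec[OF n, of q1 q2 "\<lambda>j. u $ j"] uu by simp
  have fw: "F_basis n q1 q2 *\<^sub>v w = vec n (ff (n-1) q1 q2 (\<lambda>j. w $ j))"
    using F_vec[OF n, of q1 q2 "\<lambda>j. w $ j"] ww by simp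
  have eqv: "vec n (ff (n-1) q1 q2 (\<lambda>j. u $ j)) = vec n (ff (n-1) q1 q2 (\<lambda>j. w $ j))"
    using eq fu fw by simp
  have "\<forall>r<Suc (n-1). ff (n-1) q1 q2 (\<lambda>j. u $ j) r = ff (n-1) q1 q2 (\<lambda>j. w $ j) r"
  proof (intro allI impI)
    fix r assume "r < Suc (n-1)"
    then have r: "r < n" using n by simp
    from arg_cong[OF eqv, of "\<lambda>v. v $ r"] r
    show "ff (n-1) q1 q2 (\<lambda>j. u $ j) r = ff (n-1) q1 q2 (\<lambda>j. w $ j) r" by simp
  qed
  from ff_inj[OF q2 this] show ?thesis using u w by auto
qed

lemma F_carrier: "F_basis n q1 q2 \<in> carrier_mat n (n-1)"
  by (simp add: F_basis_def)

lemma B_carrier: "burau_mat n q1 q2 i \<in> carrier_mat n n"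
  by (simp add: burau_mat_def)

lemma BF_FR: assumes n: "n \<ge> 2" and i: "i < n - 1"
  shows "burau_mat n q1 q2 i * F_basis n q1 q2 = F_basis n q1 q2 * Rm n q1 q2 i"
proof (rule mat_eq_by_vec)
  show "burau_mat n q1 q2 i * F_basis n q1 q2 \<in> carrier_mat n (n-1)"
    by (rule mult_carrier_mat[OF B_carrier F_carrier])
  show "F_basis n q1 q2 * Rm n q1 q2 i \<in> carrier_mat n (n-1)"
    by (rule mult_carrier_mat[OF F_carrier Rm_carrier])
  fix x
  have "(burau_mat n q1 q2 i * F_basis n q1 q2) *\<^sub>v vec (n-1) x
     = burau_mat n q1 q2 i *\<^sub>v (F_basis n q1 q2 *\<^sub>v vec (n-1) x)"
    by (rule assoc_mult_mat_vec[OF B_carrier F_carrier vec_carrier])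
  also have "\<dots> = vec n (bf q1 q2 i (ff (n-1) q1 q2 x))"
  proof -
    have n1: "n \<ge> 1" and i1: "i + 1 < n" using n i by auto
    show ?thesis by (simp only: F_vec[OF n1] B_vec[OF i1])
  qed
  also have "\<dots> = vec n (ff (n-1) q1 q2 (rf (n-1) q1 q2 i x))"
    using n i bf_ff[of i n] by auto
  also have "\<dots> = F_basis n q1 q2 *\<^sub>v (Rm n q1 q2 i *\<^sub>v vec (n-1) x)"
  proof -
    have n1: "n \<ge> 1" using n by auto
    show ?thesis by (simp only: F_vec[OF n1] Rm_vec[OF i])
  qed
  also have "\<dots> = (F_basis n q1 q2 * Rm n q1 q2 i) *\<^sub>v vec (n-1) x"
    by (rule assoc_mult_mat_vec[OF F_carrier Rm_carrier vec_carrier, symmetric])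
  finally show "(burau_mat n q1 q2 i * F_basis n q1 q2) *\<^sub>v vec (n-1) x
     = (F_basis n q1 q2 * Rm n q1 q2 i) *\<^sub>v vec (n-1) x" .
qed

lemma rho_gen_eq: assumes n: "n \<ge> 2" and q2: "q2 \<noteq> 0" and i: "i < n - 1"
  shows "rho_gen n q1 q2 i = Rm n q1 q2 i"
  unfolding rho_gen_def
proof (rule the_equality)
  show "Rm n q1 q2 i \<in> carrier_mat (n - 1) (n - 1) \<and>
    burau_mat n q1 q2 i * F_basis n q1 q2 = F_basis n q1 q2 * Rm n q1 q2 i"
    using Rm_carrier BF_FR[OF n i] by blast
  fix M assume M: "M \<in> carrier_mat (n - 1) (n - 1) \<and>
    burau_mat n q1 q2 i * F_basis n q1 q2 = F_basis n q1 q2 * M"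
  show "M = Rm n q1 q2 i"
  proof (rule mat_eq_by_vec)
    show "M \<in> carrier_mat (n-1) (n-1)" using M by blast
    show "Rm n q1 q2 i \<in> carrier_mat (n-1) (n-1)" by (rule Rm_carrier)
    fix x
    have "F_basis n q1 q2 *\<^sub>v (M *\<^sub>v vec (n-1) x) = (F_basis n q1 q2 * M) *\<^sub>v vec (n-1) x"
      using assoc_mult_mat_vec[OF F_carrier _ vec_carrier, of M] M by simp
    also have "\<dots> = (F_basis n q1 q2 * Rm n q1 q2 i) *\<^sub>v vec (n-1) x"
      using M BF_FR[OF n i] by simp
    also have "\<dots> = F_basis n q1 q2 *\<^sub>v (Rm n q1 q2 i *\<^sub>v vec (n-1) x)"
      by (rule assoc_mult_mat_vec[OF F_carrier Rm_carrier vec_carrier])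
    finally have fe: "F_basis n q1 q2 *\<^sub>v (M *\<^sub>v vec (n-1) x) = F_basis n q1 q2 *\<^sub>v (Rm n q1 q2 i *\<^sub>v vec (n-1) x)" .
    show "M *\<^sub>v vec (n-1) x = Rm n q1 q2 i *\<^sub>v vec (n-1) x"
      apply (rule F_inj_vec[OF q2 _ _ _ fe])
      using n M Rm_carrier[of n q1 q2 i] by auto
  qed
qed



lemma rf_zero: assumes q1: "q1 \<noteq> 0" and q2: "q2 \<noteq> 0" and i: "i < N"
  and h: "\<forall>r<N. rf N q1 q2 i x r = 0" shows "\<forall>r<N. x r = 0"
proof -
  have o: "x r = 0" if "r < N" "r \<noteq> i" for r
    using h[rule_format, OF that(1)] that q1 by (simp add: rf_def)
  have "rf N q1 q2 i x i = q2 * x i"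
    unfolding rf_def using o i by auto
  then have "x i = 0" using h i q2 by auto
  then show ?thesis using o by blast
qed

lemma Rm_vec': assumes "i < n - 1" "u \<in> carrier_vec (n-1)"
  shows "Rm n q1 q2 i *\<^sub>v u = vec (n-1) (rf (n-1) q1 q2 i (\<lambda>j. u $ j))"
proof -
  have "u = vec (n-1) (\<lambda>j. u $ j)" using assms(2) by auto
  then show ?thesis using Rm_vec[OF assms(1)] by metis
qed

lemma det_Rm: assumes q1: "q1 \<noteq> 0" and q2: "q2 \<noteq> 0" and i: "i < n - 1"
  shows "det (Rm n q1 q2 i) \<noteq> 0"
proof
  assume "det (Rm n q1 q2 i) = 0"
  then obtain v where v: "v \<in> carrier_vec (n-1)" "v \<noteq> 0\<^sub>v (n-1)" "Rm n q1 q2 i *\<^sub>v v = 0\<^sub>v (n-1)"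
    using det_0_iff_vec_prod_zero[OF Rm_carrier] by blast
  have "\<forall>r<n-1. rf (n-1) q1 q2 i (\<lambda>j. v $ j) r = 0"
  proof (intro allI impI)
    fix r assume r: "r < n - 1"
    from arg_cong[OF v(3), of "\<lambda>w. w $ r"] r show "rf (n-1) q1 q2 i (\<lambda>j. v $ j) r = 0"
      using Rm_vec'[OF i v(1)] by simp
  qed
  from rf_zero[OF q1 q2 i this] have "v = 0\<^sub>v (n-1)" using v(1) by auto
  with v(2) show False by simp
qed

lemma G_props: assumes n: "n \<ge> 2" and q1: "q1 \<noteq> 0" and q2: "q2 \<noteq> 0"
  and g: "g \<in> burau_image n q1 q2"
  shows "g \<in> carrier_mat (n-1) (n-1) \<and> det g \<noteq> 0"
  using g
proof (induction rule: burau_image.induct)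
  case one
  then show ?case by simp
next
  case (gen g i)
  then show ?case using rho_gen_eq[OF n q2 gen(2)] det_Rm[OF q1 q2 gen(2)] Rm_carrier[of n q1 q2 i]
    by (simp add: det_mult)
next
  case (gen_inv g i h)
  have "h * Rm n q1 q2 i = 1\<^sub>m (n-1)"
    using gen_inv(4) rho_gen_eq[OF n q2 gen_inv(2)] gen_inv(3) by (simp add: inverts_mat_def)
  then have "det (h * Rm n q1 q2 i) = 1" by simp
  then have "det h * det (Rm n q1 q2 i) = 1"
    using det_mult[OF gen_inv(3) Rm_carrier[of n q1 q2 i]] by simp
  then have "det h \<noteq> 0" by auto
  then show ?case using gen_inv det_mult[OF gen_inv(3), of g] by auto
qed

definition rv :: "nat \<Rightarrow> complex \<Rightarrow> complex \<Rightarrow> nat \<Rightarrow> complex vec \<Rightarrow> complex vec" where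
  "rv n q1 q2 i v = vec (n-1) (rf (n-1) q1 q2 i (\<lambda>j. v $ j))"

lemma rv_carrier: "rv n q1 q2 i v \<in> carrier_vec (n-1)"
  by (simp add: rv_def)

lemma foldr_carrier: assumes "g \<in> carrier_mat (n-1) (n-1)"
  shows "foldr (\<lambda>i h. Rm n q1 q2 i * h) ws g \<in> carrier_mat (n-1) (n-1)"
proof (induction ws)
  case Nil
  then show ?case using assms by simp
next
  case (Cons a ws)
  show ?case using mult_carrier_mat[OF Rm_carrier[of n q1 q2 a] Cons.IH] by simp
qed

lemma foldr_G: assumes n: "n \<ge> 2" and q2: "q2 \<noteq> 0" and g: "g \<in> burau_image n q1 q2"
  and ws: "set ws \<subseteq> {..<n-1}"
  shows "foldr (\<lambda>i h. Rm n q1 q2 i * h) ws g \<in> burau_image n q1 q2"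
  using ws
proof (induction ws)
  case Nil
  then show ?case using g by simp
next
  case (Cons a ws)
  then have a: "a < n - 1" by auto
  from Cons have "foldr (\<lambda>i h. Rm n q1 q2 i * h) ws g \<in> burau_image n q1 q2" by auto
  from burau_image.gen[OF this a] show ?case using rho_gen_eq[OF n q2 a] by simp
qed

lemma foldr_vec: assumes g: "g \<in> carrier_mat (n-1) (n-1)" and ws: "set ws \<subseteq> {..<n-1}"
  and w: "w \<in> carrier_vec (n-1)"
  shows "foldr (\<lambda>i h. Rm n q1 q2 i * h) ws g *\<^sub>v w = foldr (rv n q1 q2) ws (g *\<^sub>v w)"
  using ws
proof (induction ws)
  case Nil
  then show ?case by simp
next
  case (Cons a ws)
  then have a: "a < n - 1" and IH: "foldr (\<lambda>i h. Rm n q1 q2 i * h) ws g *\<^sub>v w = foldr (rv n q1 q2) ws (g *\<^sub>v w)" by auto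
  have H: "foldr (\<lambda>i h. Rm n q1 q2 i * h) ws g \<in> carrier_mat (n-1) (n-1)" by (rule foldr_carrier[OF g])
  have "foldr (\<lambda>i h. Rm n q1 q2 i * h) (a # ws) g *\<^sub>v w
      = Rm n q1 q2 a *\<^sub>v (foldr (\<lambda>i h. Rm n q1 q2 i * h) ws g *\<^sub>v w)"
    using assoc_mult_mat_vec[OF Rm_carrier H w] by simp
  also have "\<dots> = rv n q1 q2 a (foldr (\<lambda>i h. Rm n q1 q2 i * h) ws g *\<^sub>v w)"
    unfolding rv_def by (rule Rm_vec'[OF a]) (use H w in auto)
  finally show ?case using IH by simp
qed

lemma partial: assumes v: "v \<in> carrier_vec N" and m: "m \<le> N"
  shows "fold (rv (Suc N) q1 q2) [0..<m] v = vec N (\<lambda>r. if r < m then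
     q1^(m-1) * q2 * (v $ 0 - (if r + 1 < N then v $ (r+1) else 0)) else q1^m * v $ r)"
  using m
proof (induction m)
  case 0
  then show ?case using v by auto
next
  case (Suc m)
  let ?P = "\<lambda>r. if r < m then
     q1^(m-1) * q2 * (v $ 0 - (if r + 1 < N then v $ (r+1) else 0)) else q1^m * v $ r"
  have "fold (rv (Suc N) q1 q2) [0..<Suc m] v = rv (Suc N) q1 q2 m (vec N ?P)"
    using Suc by simp
  also have "\<dots> = vec N (rf N q1 q2 m ?P)"
    unfolding rv_def rf_def using Suc.prems by (intro eq_vecI) auto
  also have "\<dots> = vec N (\<lambda>r. if r < Suc m then
     q1^(Suc m-1) * q2 * (v $ 0 - (if r + 1 < N then v $ (r+1) else 0)) else q1^Suc m * v $ r)"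
  proof (intro eq_vecI)
    fix r assume "r < dim_vec (vec N (\<lambda>r. if r < Suc m then
     q1^(Suc m-1) * q2 * (v $ 0 - (if r + 1 < N then v $ (r+1) else 0)) else q1^Suc m * v $ r))"
    then have r: "r < N" by simp
    show "vec N (rf N q1 q2 m ?P) $ r = vec N (\<lambda>r. if r < Suc m then
     q1^(Suc m-1) * q2 * (v $ 0 - (if r + 1 < N then v $ (r+1) else 0)) else q1^Suc m * v $ r) $ r"
    proof (cases "r = m")
      case True
      then show ?thesis using r
        by (cases m) (auto simp: rf_def algebra_simps)
    next
      case False
      then show ?thesis using r
        by (cases m) (auto simp: rf_def algebra_simps)
    qed
  qed simp
  finally show ?case .
qed



lemma dformula: assumes v: "v \<in> carrier_vec N"
  shows "fold (rv (Suc N) q1 q2) [0..<N] v = vec N (\<lambda>r. q1^(N-1) * q2 * (v $ 0 - (if r + 1 < N then v $ (r+1) else 0)))"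
  unfolding partial[OF v le_refl] by (intro eq_vecI) auto

definition Yv :: "nat \<Rightarrow> complex vec \<Rightarrow> nat \<Rightarrow> complex" where
  "Yv N v j = (if j < N then v $ j else 0)"

lemma iter: assumes N: "N \<ge> 1" and v: "v \<in> carrier_vec N"
  shows "(fold (rv (Suc N) q1 q2) [0..<N] ^^ m) v = vec N (\<lambda>r. (q1^(N-1) * q2)^m * (-1)^m *
     (Yv N v ((r+m) mod Suc N) - Yv N v ((N+m) mod Suc N)))"
proof (induction m)
  case 0
  show ?case using v by (intro eq_vecI) (auto simp: Yv_def)
next
  case (Suc m)
  define b where "b = q1^(N-1) * q2"
  define P where "P = (\<lambda>r. b^m * (-1)^m *
     (Yv N v ((r+m) mod Suc N) - Yv N v ((N+m) mod Suc N)))"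
  have "(fold (rv (Suc N) q1 q2) [0..<N] ^^ Suc m) v = fold (rv (Suc N) q1 q2) [0..<N] (vec N P)"
    using Suc unfolding P_def b_def by simp
  also have "\<dots> = vec N (\<lambda>r. b * (vec N P $ 0 - (if r + 1 < N then vec N P $ (r+1) else 0)))"
    unfolding dformula[OF vec_carrier] b_def ..
  also have "\<dots> = vec N (\<lambda>r. b^Suc m * (-1)^Suc m *
     (Yv N v ((r+Suc m) mod Suc N) - Yv N v ((N+Suc m) mod Suc N)))"
  proof (intro eq_vecI)
    fix r assume "r < dim_vec (vec N (\<lambda>r. b^Suc m * (-1)^Suc m *
     (Yv N v ((r+Suc m) mod Suc N) - Yv N v ((N+Suc m) mod Suc N))))"
    then have r: "r < N" by simp
    have k1: "(N + Suc m) mod Suc N = m mod Suc N"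
      by (metis add_Suc add_Suc_right mod_add_self1)
    show "vec N (\<lambda>r. b * (vec N P $ 0 - (if r + 1 < N then vec N P $ (r+1) else 0))) $ r
       = vec N (\<lambda>r. b^Suc m * (-1)^Suc m *
     (Yv N v ((r+Suc m) mod Suc N) - Yv N v ((N+Suc m) mod Suc N))) $ r"
    proof (cases "r + 1 < N")
      case True
      have "r + 1 + m = r + Suc m" by simp
      then show ?thesis using r N True unfolding k1 P_def
        by (simp add: algebra_simps)
    next
      case False
      then have rN: "r + Suc m = N + m" using r by simp
      have e: "Yv N v ((r + Suc m) mod Suc N) = Yv N v ((N + m) mod Suc N)" by (simp only: rN)
      have "vec N (\<lambda>r. b * (vec N P $ 0 - (if r + 1 < N then vec N P $ (r+1) else 0))) $ r
         = b * P 0" using r False by simp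
      also have "\<dots> = b^Suc m * (-1)^Suc m *
          (Yv N v ((r+Suc m) mod Suc N) - Yv N v ((N+Suc m) mod Suc N))"
        unfolding P_def e k1 by (simp add: algebra_simps)
      finally show ?thesis using r by simp
    qed
  qed simp
  finally show ?case unfolding b_def .
qed

lemma iter_n: assumes N: "N \<ge> 1" and v: "v \<in> carrier_vec N"
  shows "(fold (rv (Suc N) q1 q2) [0..<N] ^^ Suc N) v = ((q1^(N-1) * q2)^Suc N * (-1)^Suc N) \<cdot>\<^sub>v v"
  unfolding iter[OF N v]
proof (intro eq_vecI)
  fix r assume "r < dim_vec (((q1^(N-1) * q2)^Suc N * (-1)^Suc N) \<cdot>\<^sub>v v)"
  then have r: "r < N" using v by simp
  have a0: "(r + Suc N) mod Suc N = r" by (subst mod_add_self2) (use r in simp)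
  then have a: "Suc (r + N) mod Suc N = r" by simp
  have b0: "(N + Suc N) mod Suc N = N" by (subst mod_add_self2) simp
  then have b: "Suc (N + N) mod Suc N = N" by simp
  show "vec N (\<lambda>r. (q1 ^ (N - 1) * q2) ^ Suc N * (- 1) ^ Suc N *
      (Yv N v ((r + Suc N) mod Suc N) - Yv N v ((N + Suc N) mod Suc N))) $ r =
      (((q1^(N-1) * q2)^Suc N * (-1)^Suc N) \<cdot>\<^sub>v v) $ r"
    using r v a b by (simp add: Yv_def)
qed (use v in simp)

lemma foldr_concat_rep: "foldr f (concat (replicate k L)) x = (foldr f L ^^ k) x"
  by (induction k arbitrary: x) auto

lemma smult_mat_vec': "g \<in> carrier_mat m m \<Longrightarrow> w \<in> carrier_vec m \<Longrightarrow>
   ((c::complex) \<cdot>\<^sub>m g) *\<^sub>v w = c \<cdot>\<^sub>v (g *\<^sub>v w)"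
  by (intro eq_vecI) auto

lemma scalar_in_G: assumes N: "N \<ge> 1" and q2: "q2 \<noteq> 0" and q1: "q1 \<noteq> 0"
  and g: "g \<in> burau_image (Suc N) q1 q2"
  shows "((q1^(N-1) * q2)^Suc N * (-1)^Suc N) \<cdot>\<^sub>m g \<in> burau_image (Suc N) q1 q2"
proof -
  define ws where "ws = concat (replicate (Suc N) (rev [0..<N]))"
  have n: "Suc N \<ge> 2" using N by simp
  have ws: "set ws \<subseteq> {..<Suc N - 1}" unfolding ws_def by auto
  have gc: "g \<in> carrier_mat N N" using G_props[OF n q1 q2 g] by simp
  have "foldr (\<lambda>i h. Rm (Suc N) q1 q2 i * h) ws g = ((q1^(N-1) * q2)^Suc N * (-1)^Suc N) \<cdot>\<^sub>m g"
  proof (rule mat_eq_by_vec)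
    show "foldr (\<lambda>i h. Rm (Suc N) q1 q2 i * h) ws g \<in> carrier_mat N N"
      using foldr_carrier[of g "Suc N"] gc by simp
    show "((q1^(N-1) * q2)^Suc N * (-1)^Suc N) \<cdot>\<^sub>m g \<in> carrier_mat N N" using gc by simp
    fix x
    have "foldr (\<lambda>i h. Rm (Suc N) q1 q2 i * h) ws g *\<^sub>v vec N x
        = foldr (rv (Suc N) q1 q2) ws (g *\<^sub>v vec N x)"
      using foldr_vec[of g "Suc N" ws "vec N x" q1 q2] gc ws by simp
    also have "\<dots> = (fold (rv (Suc N) q1 q2) [0..<N] ^^ Suc N) (g *\<^sub>v vec N x)"
      unfolding ws_def foldr_concat_rep by (simp add: foldr_conv_fold)
    also have "\<dots> = ((q1^(N-1) * q2)^Suc N * (-1)^Suc N) \<cdot>\<^sub>v (g *\<^sub>v vec N x)"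
      by (rule iter_n[OF N]) (use gc in simp)
    also have "\<dots> = (((q1^(N-1) * q2)^Suc N * (-1)^Suc N) \<cdot>\<^sub>m g) *\<^sub>v vec N x"
      using smult_mat_vec'[OF gc vec_carrier] by simp
    finally show "foldr (\<lambda>i h. Rm (Suc N) q1 q2 i * h) ws g *\<^sub>v vec N x =
      (((q1^(N-1) * q2)^Suc N * (-1)^Suc N) \<cdot>\<^sub>m g) *\<^sub>v vec N x" .
  qed
  moreover have "foldr (\<lambda>i h. Rm (Suc N) q1 q2 i * h) ws g \<in> burau_image (Suc N) q1 q2"
    by (rule foldr_G[OF n q2 g ws])
  ultimately show ?thesis by simp
qed

lemma poly_fun_poly: assumes "p \<in> poly_fun N" and g: "g \<in> carrier_mat N N"
  shows "\<exists>P. \<forall>x. p (x \<cdot>\<^sub>m g) = poly P x"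
  using assms(1)
proof (induction rule: poly_fun.induct)
  case (const c)
  then show ?case by (intro exI[of _ "[:c:]"]) simp
next
  case (entry i j)
  then show ?case using g by (intro exI[of _ "[:0, g $$ (i,j):]"]) simp
next
  case (add p p')
  then obtain P P' where "\<forall>x. p (x \<cdot>\<^sub>m g) = poly P x" "\<forall>x. p' (x \<cdot>\<^sub>m g) = poly P' x" by blast
  then show ?case by (intro exI[of _ "P + P'"]) simp
next
  case (mult p p')
  then obtain P P' where "\<forall>x. p (x \<cdot>\<^sub>m g) = poly P x" "\<forall>x. p' (x \<cdot>\<^sub>m g) = poly P' x" by blast
  then show ?case by (intro exI[of _ "P * P'"]) simp
qed

lemma vanish_all: assumes c0: "c \<noteq> 0" and cr: "\<not> root_of_unity c"
  and p: "p \<in> poly_fun N" and g: "g \<in> carrier_mat N N" and h: "\<forall>k. p (c^k \<cdot>\<^sub>m g) = 0"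
shows "p (z \<cdot>\<^sub>m g) = 0"
proof -
  obtain P where P: "\<forall>x. p (x \<cdot>\<^sub>m g) = poly P x" using poly_fun_poly[OF p g] by blast
  have inj: "inj (\<lambda>k::nat. c^k)"
  proof (rule injI)
    fix i j :: nat assume e: "c^i = c^j"
    show "i = j"
    proof (rule ccontr)
      assume "i \<noteq> j"
      then consider "i < j" | "j < i" by linarith
      then show False
      proof cases
        case 1
        then have "c^j = c^i * c^(j-i)" by (simp add: power_add[symmetric])
        then have c1: "c^(j-i) = 1" using e c0 by simp
        have "j-i > 0" using 1 by simp
        then show False using cr c1 unfolding root_of_unity_def by blast
      next
        case 2
        then have "c^i = c^j * c^(i-j)" by (simp add: power_add[symmetric])
        then have c1: "c^(i-j) = 1" using e c0 by simp
        have "i-j > 0" using 2 by simp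
        then show False using cr c1 unfolding root_of_unity_def by blast
      qed
    qed
  qed
  have "P = 0"
  proof (rule ccontr)
    assume "P \<noteq> 0"
    then have "finite {x. poly P x = 0}" by (rule poly_roots_finite)
    moreover have "range (\<lambda>k::nat. c^k) \<subseteq> {x. poly P x = 0}" using h P by auto
    ultimately have "finite (range (\<lambda>k::nat. c^k))" by (rule finite_subset[rotated])
    then show False using inj by (simp add: finite_image_iff)
  qed
  then show ?thesis using P by simp
qed



theorem lemmaA2:
  fixes n :: nat and q1 q2 :: complex
  assumes "n \<ge> 2"
    and "q1 * q2 \<noteq> 0"
    and "\<not> root_of_unity (- q2 / q1)"
    and "\<not> root_of_unity (q1 ^ (n - 2) * q2)"
  shows "\<forall>g \<in> burau_image n q1 q2. \<forall>z :: complex. z \<noteq> 0 \<longrightarrow>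
           z \<cdot>\<^sub>m g \<in> zariski_closure_GL (n - 1) (burau_image n q1 q2)"
proof -
  have q1: "q1 \<noteq> 0" and q2: "q2 \<noteq> 0" using assms(2) by auto
  obtain N where nN: "n = Suc N" using assms(1) by (cases n) auto
  have N: "N \<ge> 1" using assms(1) nN by simp
  define b where "b = q1^(N-1) * q2"
  have bn: "q1 ^ (n - 2) * q2 = b" unfolding b_def nN by (simp add: numeral_2_eq_2)
  define c where "c = b^Suc N * (-1)^Suc N"
  have b0: "b \<noteq> 0" using q1 q2 unfolding b_def by simp
  have c0: "c \<noteq> 0" using b0 unfolding c_def by simp
  have cr: "\<not> root_of_unity c"
  proof
    assume "root_of_unity c"
    then obtain k :: nat where k: "k > 0" "c^k = 1" unfolding root_of_unity_def by blast
    have cb: "c = (-b)^Suc N" unfolding c_def by (simp add: power_mult_distrib[symmetric])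
    have "(-b)^(Suc N * k) = ((-b)^Suc N)^k" by (rule power_mult)
    also have "\<dots> = 1" by (simp only: cb[symmetric] k(2))
    finally have "(-b)^(Suc N * k) = 1" .
    then have "((-b)^(Suc N * k))^2 = 1" by simp
    then have "b^(2 * (Suc N * k)) = 1"
      by (simp add: power_mult[symmetric] mult.commute)
    moreover have "2 * (Suc N * k) > 0" using k by simp
    ultimately show False using assms(4) bn unfolding root_of_unity_def by metis
  qed
  have G: "\<And>g. g \<in> burau_image (Suc N) q1 q2 \<Longrightarrow> c \<cdot>\<^sub>m g \<in> burau_image (Suc N) q1 q2"
    unfolding c_def b_def by (rule scalar_in_G[OF N q2 q1])
  have Gk: "c^k \<cdot>\<^sub>m g \<in> burau_image (Suc N) q1 q2" if g: "g \<in> burau_image (Suc N) q1 q2" for g k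
  proof (induction k)
    case 0
    have "g \<in> carrier_mat N N" using G_props[of "Suc N" q1 q2 g] N q1 q2 g by simp
    then have "1 \<cdot>\<^sub>m g = g" by (intro eq_matI) auto
    then show ?case using g by simp
  next
    case (Suc k)
    have "c^Suc k \<cdot>\<^sub>m g = c \<cdot>\<^sub>m (c^k \<cdot>\<^sub>m g)" by (intro eq_matI) auto
    then show ?case using G[OF Suc] by simp
  qed
  show ?thesis unfolding nN
  proof (intro ballI allI impI)
    fix g z assume g: "g \<in> burau_image (Suc N) q1 q2" and z: "(z::complex) \<noteq> 0"
    have gp: "g \<in> carrier_mat N N \<and> det g \<noteq> 0" using G_props[of "Suc N" q1 q2 g] N q1 q2 g by simp
    show "z \<cdot>\<^sub>m g \<in> zariski_closure_GL (Suc N - 1) (burau_image (Suc N) q1 q2)"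
      unfolding zariski_closure_GL_def
    proof (intro CollectI conjI ballI impI)
      show "z \<cdot>\<^sub>m g \<in> carrier_mat (Suc N - 1) (Suc N - 1)" using gp by simp
      show "det (z \<cdot>\<^sub>m g) \<noteq> 0" using gp z by simp
      fix p assume p: "p \<in> poly_fun (Suc N - 1)" and h: "\<forall>B\<in>burau_image (Suc N) q1 q2. p B = 0"
      show "p (z \<cdot>\<^sub>m g) = 0"
        by (rule vanish_all[OF c0 cr, of p N g]) (use p gp h Gk[OF g] in auto)
    qed
  qed
qed

end
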